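(* Let $\Omega\subset\mathbb{R}^d$ be a bounded domain with Lipschitz boundary, $\partial\Omega=\overline{\Gamma_D}\cup\overline{\Gamma_N}$ with $\Gamma_D,\Gamma_N$ relatively open and disjoint. Let $\mathcal{A}\in[L^\infty(\Omega)]^{d\times d}$ be symmetric and uniformly positive definite, and $c\in L^\infty(\Omega)$, $\alpha\in L^\infty(\Gamma_N)$ nonnegative. Let $V=H^1_{\Gamma_D}(\Omega)=\{v\in H^1(\Omega): v=0\text{ on }\Gamma_D\}$ and $a(u,v)=(\mathcal{A}\nabla u,\nabla v)+(cu,v)+(\alpha u,v)_{L^2(\Gamma_N)}$, and assume $a(\cdot,\cdot)$ is a scalar product on $V$, with norm $|||v|||=a(v,v)^{1/2}$. Let $C_F$ be the smallest constant such that $\|v\|_{L^2(\Omega)}\le C_F|||v|||$ for all $v\in V$. Let $u_*\in V$, $\lambda_*\in\mathbb{R}$, and let $w\in V$ satisfy $$a(w,v)=a(u_*,v)-\lambda_*(u_*,v)\quad\forall v\in V.$$ Then $$|||w|||\le\|\nabla u_*-\mathcal{A}^{-1}\mathbf{q}\|_{\mathcal{A}}+C_F\|\lambda_*u_*-cu_*+\operatorname{div}\mathbf{q}\|_{L^2(\Omega)}\quad\forall\mathbf{q}\in W,$$ where $W=\{\mathbf{q}\in H(\operatorname{div},\Omega):\mathbf{q}\cdot\mathbf{n}=-\alpha u_*\text{ on }\Gamma_N\}$.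
   Context: $(\cdot,\cdot)$ is the $L^2(\Omega)$ scalar product; $H(\operatorname{div},\Omega)$ is the space of $[L^2(\Omega)]^d$ vector fields with square integrable weak divergence; $\mathbf{n}$ is the unit outward normal to $\partial\Omega$; $\|\mathbf{q}\|_{\mathcal{A}}^2=(\mathcal{A}\mathbf{q},\mathbf{q})$. *)

theory Defs
  imports "HOL-Analysis.Analysis"
begin

definition pd :: "'d::finite \<Rightarrow> (real^'d \<Rightarrow> real) \<Rightarrow> real^'d \<Rightarrow> real" where
  "pd i f x = frechet_derivative f (at x) (axis i 1)"

definition cgrad :: "(real^'d::finite \<Rightarrow> real) \<Rightarrow> real^'d \<Rightarrow> real^'d" where
  "cgrad f x = (\<chi> i. pd i f x)"

coinductive smooth :: "(real^'d::finite \<Rightarrow> real) \<Rightarrow> bool" where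
  "f differentiable_on UNIV \<Longrightarrow> (\<forall>i. smooth (pd i f)) \<Longrightarrow> smooth f"

definition test_fn :: "(real^'d::finite) set \<Rightarrow> (real^'d \<Rightarrow> real) \<Rightarrow> bool" where
  "test_fn \<Omega> \<phi> \<longleftrightarrow> smooth \<phi> \<and> compact (closure {x. \<phi> x \<noteq> 0}) \<and> closure {x. \<phi> x \<noteq> 0} \<subseteq> \<Omega>"

definition L2 :: "'a measure \<Rightarrow> ('a \<Rightarrow> real) \<Rightarrow> bool" where
  "L2 M f \<longleftrightarrow> f \<in> borel_measurable M \<and> integrable M (\<lambda>x. (f x)^2)"

definition L2norm :: "'a measure \<Rightarrow> ('a \<Rightarrow> real) \<Rightarrow> real" where
  "L2norm M f = sqrt (LINT x|M. (f x)^2)"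

definition weak_grad :: "(real^'d::finite) set \<Rightarrow> (real^'d \<Rightarrow> real) \<Rightarrow> (real^'d \<Rightarrow> real^'d) \<Rightarrow> bool" where
  "weak_grad \<Omega> u G \<longleftrightarrow> (\<forall>i. L2 (lebesgue_on \<Omega>) (\<lambda>x. G x $ i)) \<and>
     (\<forall>\<phi>. test_fn \<Omega> \<phi> \<longrightarrow> (\<forall>i. (LINT x|lebesgue_on \<Omega>. u x * pd i \<phi> x)
                                 = - (LINT x|lebesgue_on \<Omega>. G x $ i * \<phi> x)))"

definition H1 :: "(real^'d::finite) set \<Rightarrow> (real^'d \<Rightarrow> real) \<Rightarrow> bool" where
  "H1 \<Omega> u \<longleftrightarrow> L2 (lebesgue_on \<Omega>) u \<and> (\<exists>G. weak_grad \<Omega> u G)"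

definition wgrad :: "(real^'d::finite) set \<Rightarrow> (real^'d \<Rightarrow> real) \<Rightarrow> real^'d \<Rightarrow> real^'d" where
  "wgrad \<Omega> u = (SOME G. weak_grad \<Omega> u G)"

definition weak_div :: "(real^'d::finite) set \<Rightarrow> (real^'d \<Rightarrow> real^'d) \<Rightarrow> (real^'d \<Rightarrow> real) \<Rightarrow> bool" where
  "weak_div \<Omega> q D \<longleftrightarrow> (\<forall>\<phi>. test_fn \<Omega> \<phi> \<longrightarrow>
      (LINT x|lebesgue_on \<Omega>. q x \<bullet> cgrad \<phi> x) = - (LINT x|lebesgue_on \<Omega>. D x * \<phi> x))"

definition Hdiv :: "(real^'d::finite) set \<Rightarrow> (real^'d \<Rightarrow> real^'d) \<Rightarrow> (real^'d \<Rightarrow> real) \<Rightarrow> bool" where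
  "Hdiv \<Omega> q D \<longleftrightarrow> (\<forall>i. L2 (lebesgue_on \<Omega>) (\<lambda>x. q x $ i)) \<and> L2 (lebesgue_on \<Omega>) D \<and> weak_div \<Omega> q D"

definition lipschitz_domain :: "(real^'d::finite) set \<Rightarrow> bool" where
  "lipschitz_domain \<Omega> \<longleftrightarrow> open \<Omega> \<and> connected \<Omega> \<and> \<Omega> \<noteq> {} \<and> bounded \<Omega> \<and>
    (\<forall>p\<in>frontier \<Omega>. \<exists>e r h L g. norm e = 1 \<and> r > 0 \<and> h > 0 \<and>
        L-lipschitz_on UNIV (g :: real^'d \<Rightarrow> real) \<and>
        (let U = {x. norm ((x - p) - ((x - p) \<bullet> e) *\<^sub>R e) < r \<and> \<bar>(x - p) \<bullet> e\<bar> < h}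
         in \<Omega> \<inter> U = {x\<in>U. x \<bullet> e < g (x - (x \<bullet> e) *\<^sub>R e)}))"

definition hausdorff_pre :: "nat \<Rightarrow> real \<Rightarrow> ('a::metric_space) set \<Rightarrow> ennreal" where
  "hausdorff_pre s \<delta> A = (INF C \<in> {C :: nat \<Rightarrow> 'a set. A \<subseteq> (\<Union>n. C n) \<and>
        (\<forall>n. bounded (C n) \<and> diameter (C n) \<le> \<delta>)}.
     (\<Sum>n. ennreal (if C n = {} then 0
                     else pi powr (real s / 2) / Gamma (real s / 2 + 1) * (diameter (C n) / 2) ^ s)))"

definition hausdorff_outer :: "nat \<Rightarrow> ('a::metric_space) set \<Rightarrow> ennreal" where
  "hausdorff_outer s A = (SUP \<delta> \<in> {0<..}. hausdorff_pre s \<delta> A)"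

definition hausdorff_measure :: "nat \<Rightarrow> ('a::metric_space) measure" where
  "hausdorff_measure s = measure_of UNIV (sets borel) (hausdorff_outer s)"

definition surface :: "(real^'d::finite) set \<Rightarrow> (real^'d) measure" where
  "surface \<Omega> = restrict_space (hausdorff_measure (CARD('d) - 1)) (frontier \<Omega>)"

definition is_trace :: "(real^'d::finite) set \<Rightarrow> (real^'d \<Rightarrow> real) \<Rightarrow> (real^'d \<Rightarrow> real) \<Rightarrow> bool" where
  "is_trace \<Omega> u g \<longleftrightarrow> H1 \<Omega> u \<and> L2 (surface \<Omega>) g \<and>
     (\<exists>\<phi> :: nat \<Rightarrow> real^'d \<Rightarrow> real. (\<forall>n. smooth (\<phi> n)) \<and>
        (\<lambda>n. (LINT x|lebesgue_on \<Omega>. (\<phi> n x - u x)^2)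
            + (LINT x|lebesgue_on \<Omega>. (norm (cgrad (\<phi> n) x - wgrad \<Omega> u x))^2)) \<longlonglongrightarrow> 0 \<and>
        (\<lambda>n. LINT x|surface \<Omega>. (\<phi> n x - g x)^2) \<longlonglongrightarrow> 0)"

definition tr :: "(real^'d::finite) set \<Rightarrow> (real^'d \<Rightarrow> real) \<Rightarrow> real^'d \<Rightarrow> real" where
  "tr \<Omega> u = (SOME g. is_trace \<Omega> u g)"

definition H1_0 :: "(real^'d::finite) set \<Rightarrow> (real^'d) set \<Rightarrow> (real^'d \<Rightarrow> real) set" where
  "H1_0 \<Omega> \<Gamma>D = {v. H1 \<Omega> v \<and> (\<exists>g. is_trace \<Omega> v g \<and> (AE x in surface \<Omega>. x \<in> \<Gamma>D \<longrightarrow> g x = 0))}"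

definition aform :: "(real^'d::finite) set \<Rightarrow> (real^'d \<Rightarrow> real^'d^'d) \<Rightarrow> (real^'d \<Rightarrow> real)
   \<Rightarrow> (real^'d \<Rightarrow> real) \<Rightarrow> (real^'d) set \<Rightarrow> (real^'d \<Rightarrow> real) \<Rightarrow> (real^'d \<Rightarrow> real) \<Rightarrow> real" where
  "aform \<Omega> A c \<alpha> \<Gamma>N u v =
     (LINT x|lebesgue_on \<Omega>. (A x *v wgrad \<Omega> u x) \<bullet> wgrad \<Omega> v x)
   + (LINT x|lebesgue_on \<Omega>. c x * u x * v x)
   + (LINT x|surface \<Omega>. indicator \<Gamma>N x * \<alpha> x * tr \<Omega> u x * tr \<Omega> v x)"

definition Anorm :: "(real^'d::finite) set \<Rightarrow> (real^'d \<Rightarrow> real^'d^'d) \<Rightarrow> (real^'d \<Rightarrow> real^'d) \<Rightarrow> real" where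
  "Anorm \<Omega> A q = sqrt (LINT x|lebesgue_on \<Omega>. (A x *v q x) \<bullet> q x)"

end

theory Submission
  imports Defs
begin


lemma real_cs:
  fixes a s b :: real
  assumes h: "\<And>t. t > 0 \<Longrightarrow> 2*\<bar>b\<bar> \<le> t*a + s/t" and a: "a \<ge> 0" and s: "s \<ge> 0"
  shows "\<bar>b\<bar> \<le> sqrt a * sqrt s"
proof (cases "a = 0 \<or> s = 0")
  case True
  show ?thesis
  proof (rule ccontr)
    assume "\<not> ?thesis"
    then have b: "\<bar>b\<bar> > 0" using True by auto
    show False
    proof (cases "a = 0")
      case True
      define t where "t = s/\<bar>b\<bar> + 1"
      have t: "t > 0" unfolding t_def using b s by (smt (verit) divide_nonneg_nonneg abs_ge_zero)
      have "s \<le> \<bar>b\<bar> * t" unfolding t_def using b by (simp add: distrib_left)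
      then have 1: "s/t \<le> \<bar>b\<bar>" using t by (simp add: divide_le_eq mult.commute)
      have "2*\<bar>b\<bar> \<le> t*a + s/t" using h[OF t] .
      then have "2*\<bar>b\<bar> \<le> s/t" using True by simp
      then show False using 1 b by linarith
    next
      case False
      then have s0: "s = 0" using True by simp
      define t where "t = \<bar>b\<bar>/(a+1)"
      have t: "t > 0" unfolding t_def using b a by simp
      have "2*\<bar>b\<bar> \<le> t*a + s/t" using h[OF t] .
      then have "2*\<bar>b\<bar> \<le> t*a" using s0 by simp
      moreover have "t*a \<le> \<bar>b\<bar>" unfolding t_def using a b by (simp add: divide_simps)
      ultimately show False using b by linarith
    qed
  qed
next
  case False
  then have a0: "a > 0" and s0: "s > 0" using a s by auto
  define t where "t = sqrt s / sqrt a"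
  have t: "t > 0" using a0 s0 by (simp add: t_def)
  have sa: "sqrt a * sqrt a = a" "sqrt s * sqrt s = s" using a s by simp_all
  have "t*a = sqrt a * sqrt s" using a0 sa unfolding t_def by (simp add: field_simps)
  moreover have "s/t = sqrt a * sqrt s" using a0 s0 sa unfolding t_def by (simp add: field_simps)
  ultimately show ?thesis using h[OF t] by simp
qed


lemma mat_cs:
  fixes M :: "real^'n^'n"
  assumes sym: "transpose M = M" and pd: "\<forall>\<xi>. 0 \<le> \<xi> \<bullet> (M *v \<xi>)"
  shows "\<bar>(M *v x) \<bullet> y\<bar> \<le> sqrt ((M *v x) \<bullet> x) * sqrt ((M *v y) \<bullet> y)"
proof (rule real_cs)
  have symm: "(M *v a) \<bullet> b = (M *v b) \<bullet> a" for a b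
    by (metis dot_lmul_matrix inner_commute sym vector_transpose_matrix)
  fix t :: real assume t: "t > 0"
  have q: "0 \<le> (M *v (t *\<^sub>R x + e *\<^sub>R y)) \<bullet> (t *\<^sub>R x + e *\<^sub>R y)" for e
    using pd by (simp add: inner_commute)
  have "(M *v (t *\<^sub>R x + e *\<^sub>R y)) \<bullet> (t *\<^sub>R x + e *\<^sub>R y) = t*t*((M *v x) \<bullet> x) + 2*t*e*((M *v x) \<bullet> y) + e*e*((M *v y) \<bullet> y)" for e
  proof -
    have "(M *v (t *\<^sub>R x + e *\<^sub>R y)) = t *\<^sub>R (M *v x) + e *\<^sub>R (M *v y)"
      by (simp only: matrix_vector_right_distrib matrix_vector_mult_scaleR)
    then have "(M *v (t *\<^sub>R x + e *\<^sub>R y)) \<bullet> (t *\<^sub>R x + e *\<^sub>R y) = t*t*((M *v x) \<bullet> x) + t*e*((M *v x) \<bullet> y) + e*t*((M *v y) \<bullet> x) + e*e*((M *v y) \<bullet> y)"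
      by (simp only: inner_add_left inner_add_right inner_scaleR_left inner_scaleR_right) (simp add: algebra_simps)
    then show ?thesis using symm[of y x] by (simp add: algebra_simps)
  qed
  then have "0 \<le> t*t*((M *v x) \<bullet> x) + 2*t*e*((M *v x) \<bullet> y) + e*e*((M *v y) \<bullet> y)" for e using q by metis
  from this[of 1] this[of "-1"] have "2*t*\<bar>(M *v x) \<bullet> y\<bar> \<le> t*t*((M *v x) \<bullet> x) + ((M *v y) \<bullet> y)" by (simp add: abs_if)
  then show "2*\<bar>(M *v x) \<bullet> y\<bar> \<le> t*((M *v x) \<bullet> x) + ((M *v y) \<bullet> y)/t"
    using t by (simp add: divide_simps) (simp add: algebra_simps)
next
  show "0 \<le> (M *v x) \<bullet> x" "0 \<le> (M *v y) \<bullet> y" using pd by (simp_all add: inner_commute)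
qed


lemma meas_det:
  fixes F :: "'a \<Rightarrow> real^'n^'n"
  assumes "\<And>i j. (\<lambda>x. F x $ i $ j) \<in> borel_measurable M"
  shows "(\<lambda>x. det (F x)) \<in> borel_measurable M"
  unfolding det_def using assms by measurable



lemma two_mul_le: fixes x y t :: real assumes "t > 0" shows "2*x*y \<le> t*x^2 + y^2/t"
proof -
  have "0 \<le> (t*x - y)^2" by simp
  then have "2*t*x*y \<le> t*t*x^2 + y^2" by (simp add: power2_eq_square algebra_simps)
  then show ?thesis using assms by (simp add: divide_simps power2_eq_square algebra_simps)
qed

lemma int_cs:
  fixes a b h :: "'a \<Rightarrow> real"
  assumes ia: "integrable M a" and ib: "integrable M b" and ih: "integrable M h"
    and a0: "AE x in M. 0 \<le> a x" and b0: "AE x in M. 0 \<le> b x"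
    and hb: "AE x in M. \<bar>h x\<bar> \<le> sqrt (a x) * sqrt (b x)"
  shows "\<bar>LINT x|M. h x\<bar> \<le> sqrt (LINT x|M. a x) * sqrt (LINT x|M. b x)"
proof (rule real_cs)
  fix t :: real assume t: "t > 0"
  have pw: "AE x in M. 2*\<bar>h x\<bar> \<le> t * a x + b x / t"
    using a0 b0 hb
  proof eventually_elim
    case (elim x)
    have "2*\<bar>h x\<bar> \<le> 2 * sqrt (a x) * sqrt (b x)" using elim by simp
    also have "\<dots> \<le> t*(sqrt (a x))^2 + (sqrt (b x))^2/t" by (rule two_mul_le[OF t])
    also have "\<dots> = t * a x + b x / t" using elim by simp
    finally show ?case .
  qed
  have ig: "integrable M (\<lambda>x. t * a x + b x / t)" using ia ib by auto
  have "(LINT x|M. 2 * h x) \<le> (LINT x|M. t * a x + b x / t)"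
    by (rule integral_mono_AE) (use ih ig pw in auto)
  moreover have "(LINT x|M. - (2 * h x)) \<le> (LINT x|M. t * a x + b x / t)"
    by (rule integral_mono_AE) (use ih ig pw in auto)
  moreover have "(LINT x|M. t * a x + b x / t) = t * (LINT x|M. a x) + (LINT x|M. b x) / t"
    using ia ib by simp
  ultimately show "2 * \<bar>LINT x|M. h x\<bar> \<le> t * (LINT x|M. a x) + (LINT x|M. b x) / t"
    by (simp add: abs_if)
next
  show "0 \<le> (LINT x|M. a x)" "0 \<le> (LINT x|M. b x)" using a0 b0 by (simp_all add: integral_nonneg_AE)
qed

lemma L2_prod: assumes "L2 M f" "L2 M g" shows "integrable M (\<lambda>x. f x * g x)"
proof -
  have 1: "integrable M (\<lambda>x. (f x)^2 + (g x)^2)" using assms unfolding L2_def by auto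
  have 2: "(\<lambda>x. f x * g x) \<in> borel_measurable M" by (intro borel_measurable_times) (use assms in \<open>auto simp: L2_def\<close>)
  have "AE x in M. norm (f x * g x) \<le> norm ((f x)^2 + (g x)^2)"
  proof (rule AE_I2)
    fix x
    have "2*\<bar>f x\<bar>*\<bar>g x\<bar> \<le> 1*\<bar>f x\<bar>^2 + \<bar>g x\<bar>^2/1" by (rule two_mul_le) simp
    then show "norm (f x * g x) \<le> norm ((f x)^2 + (g x)^2)"
    proof -
      have "0 \<le> \<bar>f x\<bar>*\<bar>g x\<bar>" by simp
      moreover have "2*\<bar>f x\<bar>*\<bar>g x\<bar> \<le> (f x)^2 + (g x)^2" using \<open>2*\<bar>f x\<bar>*\<bar>g x\<bar> \<le> 1*\<bar>f x\<bar>^2 + \<bar>g x\<bar>^2/1\<close> by simp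
      ultimately have "\<bar>f x\<bar>*\<bar>g x\<bar> \<le> (f x)^2 + (g x)^2" by linarith
      then show ?thesis by (simp add: abs_mult)
    qed
  qed
  then show ?thesis using Bochner_Integration.integrable_bound[OF 1 2] by simp
qed

lemma bnd_mult:
  fixes f h :: "'a \<Rightarrow> real"
  assumes "integrable M f" "h \<in> borel_measurable M" "AE x in M. \<bar>h x\<bar> \<le> K"
  shows "integrable M (\<lambda>x. h x * f x)"
proof -
  have 1: "integrable M (\<lambda>x. \<bar>K\<bar> * f x)" using assms by auto
  have 2: "(\<lambda>x. h x * f x) \<in> borel_measurable M" using assms by measurable
  have "AE x in M. norm (h x * f x) \<le> norm (\<bar>K\<bar> * f x)"
    using assms(3)
  proof eventually_elim
    case (elim x)
    have "\<bar>h x\<bar> * \<bar>f x\<bar> \<le> \<bar>K\<bar> * \<bar>f x\<bar>" by (rule mult_right_mono) (use elim in auto)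
    then show ?case by (simp add: abs_mult)
  qed
  then show ?thesis using Bochner_Integration.integrable_bound[OF 1 2] by simp
qed

lemma L2_add: assumes "L2 M f" "L2 M g" shows "L2 M (\<lambda>x. f x + g x)"
  unfolding L2_def
proof
  show "(\<lambda>x. f x + g x) \<in> borel_measurable M" by (intro borel_measurable_add) (use assms in \<open>auto simp: L2_def\<close>)
  have "integrable M (\<lambda>x. (f x)^2 + (g x)^2 + 2 * (f x * g x))"
    using assms L2_prod[OF assms] unfolding L2_def by auto
  then show "integrable M (\<lambda>x. (f x + g x)^2)" by (simp add: power2_sum mult.assoc)
qed

lemma L2_cmult: assumes "L2 M f" shows "L2 M (\<lambda>x. k * f x)"
  using assms unfolding L2_def by (auto simp: power_mult_distrib)

lemma L2_bmult: assumes "L2 M f" "h \<in> borel_measurable M" "AE x in M. \<bar>h x\<bar> \<le> K"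
  shows "L2 M (\<lambda>x. h x * f x)"
  unfolding L2_def
proof
  show "(\<lambda>x. h x * f x) \<in> borel_measurable M" by (intro borel_measurable_times) (use assms in \<open>auto simp: L2_def\<close>)
  have "integrable M (\<lambda>x. h x * (h x * (f x)^2))"
    by (rule bnd_mult[OF bnd_mult]) (use assms in \<open>auto simp: L2_def\<close>)
  then show "integrable M (\<lambda>x. (h x * f x)^2)" by (simp add: power2_eq_square algebra_simps)
qed

lemma L2_diff: assumes "L2 M f" "L2 M g" shows "L2 M (\<lambda>x. f x - g x)"
  using L2_add[OF assms(1) L2_cmult[OF assms(2), of "-1"]] by simp



lemma integ_FG:
  fixes F G :: "'a \<Rightarrow> real^'n"
  assumes "\<forall>i. L2 M (\<lambda>x. F x $ i)" "\<forall>i. L2 M (\<lambda>x. G x $ i)"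
  shows "integrable M (\<lambda>x. F x \<bullet> G x)"
proof -
  have "integrable M (\<lambda>x. \<Sum>i\<in>UNIV. F x $ i * G x $ i)"
    using assms by (intro Bochner_Integration.integrable_sum L2_prod) auto
  then show ?thesis by (simp add: inner_vec_def)
qed

lemma integ_AFG:
  fixes F G :: "'a \<Rightarrow> real^'n" and A :: "'a \<Rightarrow> real^'n^'n"
  assumes "\<forall>i j. (\<lambda>x. A x $ i $ j) \<in> borel_measurable M \<and> (\<exists>K. AE x in M. \<bar>A x $ i $ j\<bar> \<le> K)"
    "\<forall>i. L2 M (\<lambda>x. F x $ i)" "\<forall>i. L2 M (\<lambda>x. G x $ i)"
  shows "integrable M (\<lambda>x. (A x *v F x) \<bullet> G x)"
proof -
  have "integrable M (\<lambda>x. \<Sum>i\<in>UNIV. \<Sum>j\<in>UNIV. A x $ i $ j * (F x $ j * G x $ i))"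
  proof (intro Bochner_Integration.integrable_sum)
    fix i j
    obtain K where K: "AE x in M. \<bar>A x $ i $ j\<bar> \<le> K" using assms(1) by blast
    show "integrable M (\<lambda>x. A x $ i $ j * (F x $ j * G x $ i))"
      by (rule bnd_mult[OF L2_prod _ K]) (use assms in auto)
  qed
  then show ?thesis
    by (simp add: inner_vec_def matrix_vector_mult_def sum_distrib_right mult.assoc)
qed

lemma B_eq:
  fixes Mx :: "real^'n^'n" and y :: "real^'n"
  shows "matrix_inv Mx *v y = (if det Mx \<noteq> 0 then (\<chi> k. det(\<chi> i j. if j=k then y$i else Mx$i$j) / det Mx)
           else (SOME A'::real^'n^'n. False) *v y)"
proof (cases "det Mx \<noteq> 0")
  case True
  then have "invertible Mx" by (simp add: invertible_det_nz)
  then have "Mx ** matrix_inv Mx = mat 1"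
    unfolding matrix_inv_def invertible_def by (rule someI2_ex) auto
  then have "Mx *v (matrix_inv Mx *v y) = y" by (simp add: matrix_vector_mul_assoc)
  then show ?thesis using cramer[OF True] True by simp
next
  case False
  then have "\<not> invertible Mx" by (simp add: invertible_det_nz)
  then have "(\<lambda>A'. Mx ** A' = mat 1 \<and> A' ** Mx = mat 1) = (\<lambda>A'. False)"
    by (auto simp: invertible_def)
  then show ?thesis using False by (simp add: matrix_inv_def)
qed

lemma pd_det:
  fixes Mx :: "real^'n^'n"
  assumes "\<theta> > 0" "\<forall>\<xi>. \<theta> * (norm \<xi>)^2 \<le> \<xi> \<bullet> (Mx *v \<xi>)"
  shows "det Mx \<noteq> 0"
proof -
  have "\<forall>x. Mx *v x = 0 \<longrightarrow> x = 0"
  proof (intro allI impI)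
    fix x assume "Mx *v x = 0"
    then have "\<theta> * (norm x)^2 \<le> 0" using assms(2)[rule_format, of x] by simp
    then show "x = 0" using assms(1) by (simp add: mult_le_0_iff)
  qed
  then have "invertible Mx" using matrix_left_invertible_ker invertible_left_inverse by blast
  then show ?thesis by (simp add: invertible_det_nz)
qed

lemma pd_inv:
  fixes Mx :: "real^'n^'n"
  assumes th: "\<theta> > 0" and pd: "\<forall>\<xi>. \<theta> * (norm \<xi>)^2 \<le> \<xi> \<bullet> (Mx *v \<xi>)"
  shows "Mx *v (matrix_inv Mx *v y) = y" "norm (matrix_inv Mx *v y) \<le> norm y / \<theta>"
proof -
  have "invertible Mx" using pd_det[OF assms] by (simp add: invertible_det_nz)
  then have "Mx ** matrix_inv Mx = mat 1"
    unfolding matrix_inv_def invertible_def by (rule someI2_ex) auto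
  then show My: "Mx *v (matrix_inv Mx *v y) = y" by (simp add: matrix_vector_mul_assoc)
  define z where "z = matrix_inv Mx *v y"
  have "\<theta> * (norm z)^2 \<le> z \<bullet> y" using pd[rule_format, of z] My unfolding z_def by simp
  also have "\<dots> \<le> norm z * norm y" by (rule norm_cauchy_schwarz)
  finally have 1: "\<theta> * (norm z)^2 \<le> norm z * norm y" .
  have "\<theta> * norm z \<le> norm y"
  proof (cases "norm z = 0")
    case True then show ?thesis by simp
  next
    case False
    then have "norm z > 0" by simp
    with 1 show ?thesis by (simp add: power2_eq_square)
  qed
  then show "norm (matrix_inv Mx *v y) \<le> norm y / \<theta>" using th unfolding z_def by (simp add: field_simps)
qed

lemma B_meas:
  fixes A :: "'a \<Rightarrow> real^'n^'n" and q :: "'a \<Rightarrow> real^'n"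
  assumes "\<And>i j. (\<lambda>x. A x $ i $ j) \<in> borel_measurable M" "\<And>i. (\<lambda>x. q x $ i) \<in> borel_measurable M"
  shows "(\<lambda>x. (matrix_inv (A x) *v q x) $ k) \<in> borel_measurable M"
proof -
  have d1: "(\<lambda>x. det (A x)) \<in> borel_measurable M" by (rule meas_det) (use assms in auto)
  have d2: "(\<lambda>x. det (\<chi> i j. if j=k then q x $ i else A x $ i $ j)) \<in> borel_measurable M"
    by (rule meas_det) (use assms in auto)
  have d3: "(\<lambda>x. ((SOME A'::real^'n^'n. False) *v q x) $ k) \<in> borel_measurable M"
    unfolding matrix_vector_mult_def using assms by simp
  have "(\<lambda>x. if det (A x) \<noteq> 0 then det (\<chi> i j. if j=k then q x $ i else A x $ i $ j) / det (A x)
          else ((SOME A'::real^'n^'n. False) *v q x) $ k) \<in> borel_measurable M"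
    using d1 d2 d3 by measurable
  moreover have "(\<lambda>x. (matrix_inv (A x) *v q x) $ k) = (\<lambda>x. if det (A x) \<noteq> 0 then det (\<chi> i j. if j=k then q x $ i else A x $ i $ j) / det (A x)
          else ((SOME A'::real^'n^'n. False) *v q x) $ k)"
    by (rule ext) (simp add: B_eq[of "A _"])
  ultimately show ?thesis by simp
qed


lemma L2norm_nonneg: "0 \<le> L2norm M f"
  unfolding L2norm_def by (simp add: integral_nonneg_AE)

lemma aform_nonneg:
  assumes pd: "\<exists>\<theta>>0. AE x in lebesgue_on \<Omega>. \<forall>\<xi>. \<theta> * (norm \<xi>)^2 \<le> \<xi> \<bullet> (A x *v \<xi>)"
    and c: "AE x in lebesgue_on \<Omega>. 0 \<le> c x"
    and al: "AE x in surface \<Omega>. x \<in> \<Gamma>N \<longrightarrow> 0 \<le> \<alpha> x"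
  shows "0 \<le> aform \<Omega> A c \<alpha> \<Gamma>N v v"
proof -
  obtain \<theta> where th: "\<theta> > 0" and pdA: "AE x in lebesgue_on \<Omega>. \<forall>\<xi>. \<theta> * (norm \<xi>)^2 \<le> \<xi> \<bullet> (A x *v \<xi>)"
    using pd by blast
  have 1: "0 \<le> (LINT x|lebesgue_on \<Omega>. (A x *v wgrad \<Omega> v x) \<bullet> wgrad \<Omega> v x)"
    using pdA
  proof (intro integral_nonneg_AE, eventually_elim)
    case (elim x)
    have "0 \<le> \<theta> * (norm (wgrad \<Omega> v x))^2" using th by simp
    also have "\<dots> \<le> wgrad \<Omega> v x \<bullet> (A x *v wgrad \<Omega> v x)" using elim by blast
    finally show ?case by (simp add: inner_commute)
  qed
  have 2: "0 \<le> (LINT x|lebesgue_on \<Omega>. c x * v x * v x)"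
    using c by (intro integral_nonneg_AE, eventually_elim) (simp add: mult.assoc)
  have 3: "0 \<le> (LINT x|surface \<Omega>. indicator \<Gamma>N x * \<alpha> x * tr \<Omega> v x * tr \<Omega> v x)"
    using al by (intro integral_nonneg_AE, eventually_elim) (auto simp: indicator_def mult.assoc)
  show ?thesis unfolding aform_def using 1 2 3 by simp
qed

lemma H1_facts:
  assumes "v \<in> H1_0 \<Omega> \<Gamma>D"
  shows "L2 (lebesgue_on \<Omega>) v" "\<forall>i. L2 (lebesgue_on \<Omega>) (\<lambda>x. wgrad \<Omega> v x $ i)"
proof -
  have h: "H1 \<Omega> v" using assms by (simp add: H1_0_def)
  then show "L2 (lebesgue_on \<Omega>) v" by (simp add: H1_def)
  from h obtain G where "weak_grad \<Omega> v G" by (auto simp: H1_def)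
  then have "weak_grad \<Omega> v (wgrad \<Omega> v)" unfolding wgrad_def by (metis someI)
  then show "\<forall>i. L2 (lebesgue_on \<Omega>) (\<lambda>x. wgrad \<Omega> v x $ i)" by (simp add: weak_grad_def)
qed

lemma final_arith:
  fixes aww S R CF P Lw Ih Irw :: real
  assumes "aww \<ge> 0" "S \<ge> 0" "R \<ge> 0" "CF \<ge> 0" "P \<le> sqrt aww" "P \<ge> 0"
    "aww = Ih - Irw" "\<bar>Ih\<bar> \<le> S * P" "\<bar>Irw\<bar> \<le> R * Lw" "Lw \<le> CF * sqrt aww"
  shows "sqrt aww \<le> S + CF * R"
proof (cases "aww = 0")
  case True then show ?thesis using assms by simp
next
  case False
  let ?s = "sqrt aww"
  have s: "?s > 0" using assms(1) False by simp
  have "?s * ?s = aww" using assms(1) by simp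
  also have "\<dots> \<le> S * P + R * Lw" using assms(7-9) by linarith
  also have "\<dots> \<le> S * ?s + R * (CF * ?s)"
    using assms by (intro add_mono mult_left_mono) auto
  finally have "?s * ?s \<le> (S + CF * R) * ?s" by (simp add: algebra_simps)
  then show ?thesis using s by (metis mult_right_le_imp_le)
qed

theorem theorem4p3:
  fixes \<Omega> \<Gamma>D \<Gamma>N :: "(real^'d::finite) set"
    and A :: "real^'d \<Rightarrow> real^'d^'d"
    and c \<alpha> :: "real^'d \<Rightarrow> real"
    and C_F lam :: real
    and u w :: "real^'d \<Rightarrow> real"
  assumes dom: "lipschitz_domain \<Omega>"
    and bdry: "\<Gamma>D \<subseteq> frontier \<Omega>" "\<Gamma>N \<subseteq> frontier \<Omega>"
      "openin (top_of_set (frontier \<Omega>)) \<Gamma>D" "openin (top_of_set (frontier \<Omega>)) \<Gamma>N"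
      "\<Gamma>D \<inter> \<Gamma>N = {}" "closure \<Gamma>D \<union> closure \<Gamma>N = frontier \<Omega>"
    and A_Linf: "\<forall>i j. (\<lambda>x. A x $ i $ j) \<in> borel_measurable (lebesgue_on \<Omega>) \<and>
                   (\<exists>M. AE x in lebesgue_on \<Omega>. \<bar>A x $ i $ j\<bar> \<le> M)"
    and A_sym: "AE x in lebesgue_on \<Omega>. transpose (A x) = A x"
    and A_pd: "\<exists>\<theta>>0. AE x in lebesgue_on \<Omega>. \<forall>\<xi>. \<theta> * (norm \<xi>)^2 \<le> \<xi> \<bullet> (A x *v \<xi>)"
    and c_Linf: "c \<in> borel_measurable (lebesgue_on \<Omega>)" "\<exists>M. AE x in lebesgue_on \<Omega>. \<bar>c x\<bar> \<le> M"
    and c_nonneg: "AE x in lebesgue_on \<Omega>. 0 \<le> c x"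
    and \<alpha>_Linf: "\<alpha> \<in> borel_measurable (restrict_space (surface \<Omega>) \<Gamma>N)"
      "\<exists>M. AE x in surface \<Omega>. x \<in> \<Gamma>N \<longrightarrow> \<bar>\<alpha> x\<bar> \<le> M"
    and \<alpha>_nonneg: "AE x in surface \<Omega>. x \<in> \<Gamma>N \<longrightarrow> 0 \<le> \<alpha> x"
    and a_scalar: "\<forall>v\<in>H1_0 \<Omega> \<Gamma>D. aform \<Omega> A c \<alpha> \<Gamma>N v v = 0 \<longrightarrow> (AE x in lebesgue_on \<Omega>. v x = 0)"
    and CF: "\<forall>v\<in>H1_0 \<Omega> \<Gamma>D. L2norm (lebesgue_on \<Omega>) v \<le> C_F * sqrt (aform \<Omega> A c \<alpha> \<Gamma>N v v)"
      "\<forall>C. (\<forall>v\<in>H1_0 \<Omega> \<Gamma>D. L2norm (lebesgue_on \<Omega>) v \<le> C * sqrt (aform \<Omega> A c \<alpha> \<Gamma>N v v)) \<longrightarrow> C_F \<le> C"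
    and u: "u \<in> H1_0 \<Omega> \<Gamma>D"
    and w: "w \<in> H1_0 \<Omega> \<Gamma>D"
    and w_eq: "\<forall>v\<in>H1_0 \<Omega> \<Gamma>D. aform \<Omega> A c \<alpha> \<Gamma>N w v
                 = aform \<Omega> A c \<alpha> \<Gamma>N u v - lam * (LINT x|lebesgue_on \<Omega>. u x * v x)"
  shows "\<forall>q D. Hdiv \<Omega> q D \<and>
            (\<forall>v\<in>H1_0 \<Omega> \<Gamma>D. (LINT x|lebesgue_on \<Omega>. q x \<bullet> wgrad \<Omega> v x) + (LINT x|lebesgue_on \<Omega>. D x * v x)
                 = - (LINT x|surface \<Omega>. indicator \<Gamma>N x * \<alpha> x * tr \<Omega> u x * tr \<Omega> v x))
         \<longrightarrow> sqrt (aform \<Omega> A c \<alpha> \<Gamma>N w w)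
             \<le> Anorm \<Omega> A (\<lambda>x. wgrad \<Omega> u x - matrix_inv (A x) *v q x)
               + C_F * L2norm (lebesgue_on \<Omega>) (\<lambda>x. lam * u x - c x * u x + D x)"
proof (intro allI impI)
  fix q :: "real^'d \<Rightarrow> real^'d" and D :: "real^'d \<Rightarrow> real"
  assume qD: "Hdiv \<Omega> q D \<and>
            (\<forall>v\<in>H1_0 \<Omega> \<Gamma>D. (LINT x|lebesgue_on \<Omega>. q x \<bullet> wgrad \<Omega> v x) + (LINT x|lebesgue_on \<Omega>. D x * v x)
                 = - (LINT x|surface \<Omega>. indicator \<Gamma>N x * \<alpha> x * tr \<Omega> u x * tr \<Omega> v x))"
  let ?M = "lebesgue_on \<Omega>"
  obtain \<theta> where th: "\<theta> > 0" and pdA: "AE x in ?M. \<forall>\<xi>. \<theta> * (norm \<xi>)^2 \<le> \<xi> \<bullet> (A x *v \<xi>)"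
    using A_pd by blast
  define Gu where "Gu = wgrad \<Omega> u"
  define Gw where "Gw = wgrad \<Omega> w"
  define B where "B = (\<lambda>x. matrix_inv (A x) *v q x)"
  define e where "e = (\<lambda>x. Gu x - B x)"
  define r where "r = (\<lambda>x. lam * u x - c x * u x + D x)"
  have Lu: "L2 ?M u" and LGu: "\<forall>i. L2 ?M (\<lambda>x. Gu x $ i)" using H1_facts[OF u] by (auto simp: Gu_def)
  have Lw: "L2 ?M w" and LGw: "\<forall>i. L2 ?M (\<lambda>x. Gw x $ i)" using H1_facts[OF w] by (auto simp: Gw_def)
  have Lq: "\<forall>i. L2 ?M (\<lambda>x. q x $ i)" and LD: "L2 ?M D" using qD by (auto simp: Hdiv_def)
  have eqv: "(LINT x|?M. q x \<bullet> Gw x) + (LINT x|?M. D x * w x)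
                 = - (LINT x|surface \<Omega>. indicator \<Gamma>N x * \<alpha> x * tr \<Omega> u x * tr \<Omega> w x)"
    using qD w by (auto simp: Gw_def)
  have Ameas: "\<And>i j. (\<lambda>x. A x $ i $ j) \<in> borel_measurable ?M" using A_Linf by blast
  have qmeas: "\<And>i. (\<lambda>x. q x $ i) \<in> borel_measurable ?M" using Lq by (simp add: L2_def)
  have LB: "\<forall>j. L2 ?M (\<lambda>x. B x $ j)"
  proof
    fix j
    have m: "(\<lambda>x. B x $ j) \<in> borel_measurable ?M" unfolding B_def by (rule B_meas[OF Ameas qmeas])
    have ig: "integrable ?M (\<lambda>x. (\<Sum>i\<in>UNIV. (q x $ i)^2) / \<theta>^2)"
      using Lq by (auto simp: L2_def)
    have m2: "(\<lambda>x. (B x $ j)^2) \<in> borel_measurable ?M" using m by measurable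
    have "AE x in ?M. norm ((B x $ j)^2) \<le> norm ((\<Sum>i\<in>UNIV. (q x $ i)^2) / \<theta>^2)"
      using pdA
    proof eventually_elim
      case (elim x)
      have "\<bar>B x $ j\<bar> \<le> norm (B x)" by (rule component_le_norm_cart)
      also have "\<dots> \<le> norm (q x) / \<theta>" unfolding B_def using pd_inv(2)[OF th elim] .
      finally have "\<bar>B x $ j\<bar> \<le> norm (q x) / \<theta>" .
      then have "\<bar>B x $ j\<bar>^2 \<le> (norm (q x) / \<theta>)^2" by (rule power_mono) simp
      also have "\<dots> = (norm (q x))^2 / \<theta>^2" by (simp add: power_divide)
      also have "(norm (q x))^2 = (\<Sum>i\<in>UNIV. (q x $ i)^2)"
        by (simp add: norm_vec_def L2_set_def sum_nonneg)
      finally show ?case by (simp add: sum_nonneg)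
    qed
    then have "integrable ?M (\<lambda>x. (B x $ j)^2)" by (rule Bochner_Integration.integrable_bound[OF ig m2])
    then show "L2 ?M (\<lambda>x. B x $ j)" using m by (simp add: L2_def)
  qed
  have Le: "\<forall>j. L2 ?M (\<lambda>x. e x $ j)" unfolding e_def
  proof
    fix j show "L2 ?M (\<lambda>x. (Gu x - B x) $ j)"
      using L2_diff[of ?M "\<lambda>x. Gu x $ j" "\<lambda>x. B x $ j"] LGu LB by simp
  qed
  have Lr: "L2 ?M r"
  proof -
    obtain K where K: "AE x in ?M. \<bar>c x\<bar> \<le> K" using c_Linf(2) by blast
    have "L2 ?M (\<lambda>x. c x * u x)" by (rule L2_bmult[OF Lu c_Linf(1) K])
    then show ?thesis unfolding r_def by (intro L2_add L2_diff L2_cmult Lu LD)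
  qed
  have i_ae: "integrable ?M (\<lambda>x. (A x *v e x) \<bullet> e x)" by (rule integ_AFG[OF A_Linf Le Le])
  have i_aw: "integrable ?M (\<lambda>x. (A x *v Gw x) \<bullet> Gw x)" by (rule integ_AFG[OF A_Linf LGw LGw])
  have i_X: "integrable ?M (\<lambda>x. (A x *v Gu x) \<bullet> Gw x)" by (rule integ_AFG[OF A_Linf LGu LGw])
  have i_Q: "integrable ?M (\<lambda>x. q x \<bullet> Gw x)" by (rule integ_FG[OF Lq LGw])
  have i_uw: "integrable ?M (\<lambda>x. u x * w x)" by (rule L2_prod[OF Lu Lw])
  have i_Dw: "integrable ?M (\<lambda>x. D x * w x)" by (rule L2_prod[OF LD Lw])
  have i_cuw: "integrable ?M (\<lambda>x. c x * u x * w x)"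
  proof -
    obtain K where K: "AE x in ?M. \<bar>c x\<bar> \<le> K" using c_Linf(2) by blast
    have "integrable ?M (\<lambda>x. c x * (u x * w x))" by (rule bnd_mult[OF i_uw c_Linf(1) K])
    then show ?thesis by (simp add: mult.assoc)
  qed
  have i_rw: "integrable ?M (\<lambda>x. r x * w x)" by (rule L2_prod[OF Lr Lw])
  have i_r2: "integrable ?M (\<lambda>x. (r x)^2)" and i_w2: "integrable ?M (\<lambda>x. (w x)^2)"
    using Lr Lw by (auto simp: L2_def)
  define X where "X = (LINT x|?M. (A x *v Gu x) \<bullet> Gw x)"
  define Y where "Y = (LINT x|?M. c x * u x * w x)"
  define Z where "Z = (LINT x|surface \<Omega>. indicator \<Gamma>N x * \<alpha> x * tr \<Omega> u x * tr \<Omega> w x)"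
  define Uw where "Uw = (LINT x|?M. u x * w x)"
  define Q where "Q = (LINT x|?M. q x \<bullet> Gw x)"
  define Dw where "Dw = (LINT x|?M. D x * w x)"
  define aww where "aww = aform \<Omega> A c \<alpha> \<Gamma>N w w"
  define Ih where "Ih = (LINT x|?M. (A x *v Gu x) \<bullet> Gw x - q x \<bullet> Gw x)"
  define Irw where "Irw = (LINT x|?M. r x * w x)"
  have e1: "aww = X + Y + Z - lam * Uw"
    using w_eq w unfolding aww_def by (simp add: aform_def X_def Y_def Z_def Uw_def Gu_def Gw_def)
  have e2: "Q + Dw = - Z" using eqv by (simp add: Q_def Dw_def Z_def)
  have e3: "Ih = X - Q" unfolding Ih_def X_def Q_def by (rule Bochner_Integration.integral_diff[OF i_X i_Q])
  have e4: "Irw = lam * Uw - Y + Dw"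
  proof -
    have "(\<lambda>x. r x * w x) = (\<lambda>x. lam * (u x * w x) - c x * u x * w x + D x * w x)"
      by (rule ext) (simp add: r_def algebra_simps)
    then have "Irw = (LINT x|?M. lam * (u x * w x) - c x * u x * w x + D x * w x)" by (simp add: Irw_def)
    also have "\<dots> = lam * Uw - Y + Dw"
      using i_uw i_cuw i_Dw by (simp add: Uw_def Y_def Dw_def)
    finally show ?thesis .
  qed
  have main_eq: "aww = Ih - Irw" using e1 e2 e3 e4 by linarith
  have nn: "\<And>z x. \<forall>\<xi>::real^'d. \<theta> * (norm \<xi>)^2 \<le> \<xi> \<bullet> (A x *v \<xi>) \<Longrightarrow> 0 \<le> (A x *v z) \<bullet> z"
  proof -
    fix z :: "real^'d" and x assume h: "\<forall>\<xi>::real^'d. \<theta> * (norm \<xi>)^2 \<le> \<xi> \<bullet> (A x *v \<xi>)"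
    have "0 \<le> \<theta> * (norm z)^2" using th by simp
    also have "\<dots> \<le> z \<bullet> (A x *v z)" using h by blast
    finally show "0 \<le> (A x *v z) \<bullet> z" by (simp add: inner_commute)
  qed
  have cs1: "\<bar>Ih\<bar> \<le> sqrt (LINT x|?M. (A x *v e x) \<bullet> e x) * sqrt (LINT x|?M. (A x *v Gw x) \<bullet> Gw x)"
    unfolding Ih_def
  proof (rule int_cs[OF i_ae i_aw])
    show "integrable ?M (\<lambda>x. (A x *v Gu x) \<bullet> Gw x - q x \<bullet> Gw x)" using i_X i_Q by auto
    show "AE x in ?M. 0 \<le> (A x *v e x) \<bullet> e x" using pdA by eventually_elim (rule nn)
    show "AE x in ?M. 0 \<le> (A x *v Gw x) \<bullet> Gw x" using pdA by eventually_elim (rule nn)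
    show "AE x in ?M. \<bar>(A x *v Gu x) \<bullet> Gw x - q x \<bullet> Gw x\<bar>
            \<le> sqrt ((A x *v e x) \<bullet> e x) * sqrt ((A x *v Gw x) \<bullet> Gw x)"
      using pdA A_sym
    proof eventually_elim
      case (elim x)
      have Aq: "A x *v B x = q x" unfolding B_def by (rule pd_inv(1)[OF th elim(1)])
      have "(A x *v Gu x) \<bullet> Gw x - q x \<bullet> Gw x = (A x *v e x) \<bullet> Gw x"
        unfolding e_def using Aq by (simp add: matrix_vector_mult_diff_distrib inner_diff_left)
      moreover have "\<forall>\<xi>. 0 \<le> \<xi> \<bullet> (A x *v \<xi>)" using nn[OF elim(1)] by (simp add: inner_commute)
      ultimately show ?case using mat_cs[OF elim(2)] by simp
    qed
  qed
  have cs2: "\<bar>Irw\<bar> \<le> L2norm ?M r * L2norm ?M w"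
    unfolding Irw_def L2norm_def
    by (rule int_cs[OF i_r2 i_w2 i_rw]) (auto simp: real_sqrt_abs abs_mult)
  have aw_le: "(LINT x|?M. (A x *v Gw x) \<bullet> Gw x) \<le> aww"
  proof -
    have 2: "0 \<le> (LINT x|?M. c x * w x * w x)"
      using c_nonneg by (intro integral_nonneg_AE, eventually_elim) (simp add: mult.assoc)
    have 3: "0 \<le> (LINT x|surface \<Omega>. indicator \<Gamma>N x * \<alpha> x * tr \<Omega> w x * tr \<Omega> w x)"
      using \<alpha>_nonneg by (intro integral_nonneg_AE, eventually_elim) (auto simp: indicator_def mult.assoc)
    show ?thesis unfolding aww_def aform_def Gw_def using 2 3 by simp
  qed
  have aw_nn: "0 \<le> (LINT x|?M. (A x *v Gw x) \<bullet> Gw x)"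
    using pdA by (intro integral_nonneg_AE, eventually_elim) (rule nn)
  have aww_nn: "0 \<le> aww" unfolding aww_def by (rule aform_nonneg[OF A_pd c_nonneg \<alpha>_nonneg])
  have CFw: "L2norm ?M w \<le> C_F * sqrt aww" using CF(1) w unfolding aww_def by blast
  have CF_nn: "C_F \<ge> 0"
  proof (rule ccontr)
    assume neg: "\<not> C_F \<ge> 0"
    have "\<forall>v\<in>H1_0 \<Omega> \<Gamma>D. L2norm ?M v \<le> (C_F - 1) * sqrt (aform \<Omega> A c \<alpha> \<Gamma>N v v)"
    proof
      fix v assume v: "v \<in> H1_0 \<Omega> \<Gamma>D"
      have s0: "0 \<le> sqrt (aform \<Omega> A c \<alpha> \<Gamma>N v v)"
        using aform_nonneg[OF A_pd c_nonneg \<alpha>_nonneg] by simp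
      have "0 \<le> C_F * sqrt (aform \<Omega> A c \<alpha> \<Gamma>N v v)" using CF(1) v L2norm_nonneg order_trans by blast
      then have "sqrt (aform \<Omega> A c \<alpha> \<Gamma>N v v) = 0" using neg s0 by (simp add: zero_le_mult_iff)
      then show "L2norm ?M v \<le> (C_F - 1) * sqrt (aform \<Omega> A c \<alpha> \<Gamma>N v v)"
        using CF(1) v by auto
    qed
    then have "C_F \<le> C_F - 1" using CF(2) by blast
    then show False by simp
  qed
  have S_nn: "0 \<le> sqrt (LINT x|?M. (A x *v e x) \<bullet> e x)"
    using pdA by (simp, intro integral_nonneg_AE, eventually_elim) (rule nn)
  have "sqrt aww \<le> sqrt (LINT x|?M. (A x *v e x) \<bullet> e x) + C_F * L2norm ?M r"
    by (rule final_arith[OF aww_nn S_nn L2norm_nonneg CF_nn _ _ main_eq cs1 cs2 CFw])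
       (use aw_le aw_nn in auto)
  then show "sqrt (aform \<Omega> A c \<alpha> \<Gamma>N w w)
             \<le> Anorm \<Omega> A (\<lambda>x. wgrad \<Omega> u x - matrix_inv (A x) *v q x)
               + C_F * L2norm (lebesgue_on \<Omega>) (\<lambda>x. lam * u x - c x * u x + D x)"
    unfolding aww_def Anorm_def e_def B_def Gu_def r_def .
qed

end
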